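(* Let $x$ be a positive integer relatively prime to $3$. Then every element $(x_0,x_1,x_2,\dots)\in\widetilde{\mathcal{I}}_x$ has some term $x_i$ with $x_i\equiv 2\pmod 9$.
   Context: Let $T(z)=z/2$ for $z$ even and $T(z)=(3z+1)/2$ for $z$ odd. For a positive integer $x$ not divisible by $3$, $\widetilde{\mathcal{I}}_x$ is the set of infinite sequences $(x_0,x_1,x_2,\dots)$ of positive integers not divisible by $3$ such that $x_0=x$ and $T(x_{i+1})=x_i$ for all $i\ge 0$. *)

theory Defs
  imports Main
begin

definition T :: "nat \<Rightarrow> nat" where
  "T z = (if even z then z div 2 else (3 * z + 1) div 2)"

definition Itilde :: "nat \<Rightarrow> (nat \<Rightarrow> nat) set" where
  "Itilde x = {s. s 0 = x \<and> (\<forall>i. 0 < s i \<and> \<not> 3 dvd s i) \<and> (\<forall>i. T (s (Suc i)) = s i)}"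

end

theory Submission
  imports Defs
begin

lemma step: "T a = b \<Longrightarrow> a = 2*b \<or> (3*a+1 = 2*b)"
  unfolding T_def by (cases "even a") (auto elim!: evenE oddE)

lemma key:
  fixes a b :: nat
  assumes "b = 2*a \<or> 3*b+1 = 2*a" "\<not> 3 dvd b"
  shows "(a mod 9 = 1 \<longrightarrow> b mod 9 = 2) \<and> (a mod 9 = 5 \<longrightarrow> b mod 9 = 1) \<and>
         (a mod 9 = 7 \<longrightarrow> b mod 9 = 5) \<and> (a mod 9 = 4 \<longrightarrow> b mod 9 = 8) \<and>
         (a mod 9 = 8 \<longrightarrow> b mod 9 = 7 \<or> (b < a \<and> b mod 9 \<noteq> 4))"
proof -
  define q r where "q = a div 9" and "r = a mod 9"
  have a: "a = 9*q + r" unfolding q_def r_def by simp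
  have r: "r < 9" unfolding r_def by simp
  show ?thesis using assms(1)
  proof
    assume b: "b = 2*a"
    have "b = 2*r + (2*q)*9" using a b by simp
    then have "b mod 9 = (2*r) mod 9" by (metis mod_mult_self1)
    then show ?thesis using r unfolding r_def[symmetric] by auto
  next
    assume b: "3*b+1 = 2*a"
    have "r \<noteq> 1" using a b by presburger
    moreover have "r \<noteq> 4" using a b by presburger
    moreover have "r \<noteq> 7" using a b by presburger
    moreover have "r \<noteq> 5" using a b assms(2) by presburger
    moreover have "b < a" using b by linarith
    moreover have "r = 8 \<Longrightarrow> b mod 9 \<noteq> 4"
    proof
      assume "r = 8" "b mod 9 = 4"
      then have "3*b = 3*(6*q+5)" using a b by simp
      then have "b = 6*q+5" by simp
      then have "b = 2 + (2*q+1)*3" by simp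
      then have "b mod 3 = 2 mod 3" by (metis mod_mult_self1)
      then have "b mod 3 = 2" by simp
      moreover have "b mod 3 = (b mod 9) mod 3" by (simp add: mod_mod_cancel)
      then have "b mod 3 = 1" using \<open>b mod 9 = 4\<close> by simp
      ultimately show False by simp
    qed
    ultimately show ?thesis unfolding r_def by auto
  qed
qed

theorem mainTheorem11:
  fixes x :: nat and s :: "nat \<Rightarrow> nat"
  assumes "0 < x" and "coprime x 3" and "s \<in> Itilde x"
  shows "\<exists>i. s i mod 9 = 2"
proof (rule ccontr)
  assume H: "\<not> (\<exists>i. s i mod 9 = 2)"
  have nd: "\<And>i. \<not> 3 dvd s i" and st: "\<And>i. T (s (Suc i)) = s i"
    using assms(3) unfolding Itilde_def by auto
  have K: "(s i mod 9 = 1 \<longrightarrow> s (Suc i) mod 9 = 2) \<and> (s i mod 9 = 5 \<longrightarrow> s (Suc i) mod 9 = 1) \<and>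
         (s i mod 9 = 7 \<longrightarrow> s (Suc i) mod 9 = 5) \<and> (s i mod 9 = 4 \<longrightarrow> s (Suc i) mod 9 = 8) \<and>
         (s i mod 9 = 8 \<longrightarrow> s (Suc i) mod 9 = 7 \<or> (s (Suc i) < s i \<and> s (Suc i) mod 9 \<noteq> 4))" for i
    by (rule key) (use step st nd in blast)+
  have r: "s i mod 9 \<in> {1,2,4,5,7,8}" for i
  proof -
    have "s i mod 9 < 9" by simp
    moreover have "(s i mod 9) mod 3 \<noteq> 0"
      using nd[of i] by (simp add: mod_mod_cancel dvd_eq_mod_eq_0)
    ultimately have "s i mod 9 \<in> {0..<9}" "(s i mod 9) mod 3 \<noteq> 0" by auto
    then show ?thesis by (auto simp: atLeastLessThan_nat_numeral)
  qed
  have n1: "s i mod 9 \<noteq> 1" for i using K[of i] H by blast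
  have n5: "s i mod 9 \<noteq> 5" for i using K[of i] n1[of "Suc i"] by blast
  have n7: "s i mod 9 \<noteq> 7" for i using K[of i] n5[of "Suc i"] by blast
  have a8: "s (Suc i) mod 9 = 8" for i
  proof -
    have "s i mod 9 = 4 \<or> s i mod 9 = 8" using r[of i] H n1[of i] n5[of i] n7[of i] by auto
    moreover have "s (Suc i) mod 9 = 4 \<or> s (Suc i) mod 9 = 8"
      using r[of "Suc i"] H n1[of "Suc i"] n5[of "Suc i"] n7[of "Suc i"] by auto
    ultimately show ?thesis using K[of i] n7[of "Suc i"] by auto
  qed
  have dec: "s (Suc (Suc i)) < s (Suc i)" for i
    using K[of "Suc i"] a8[of i] n7 by blast
  have "s (Suc i) + i \<le> s 1" for i
  proof (induction i)
    case (Suc i) then show ?case using dec[of i] by simp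
  qed simp
  from this[of "s 1"] show False using nd[of "Suc (s 1)"] by simp
qed

end
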